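(* Let $f \in \mathbb{C}[x_1,\ldots,x_n]$ be a homogeneous polynomial of degree $d$ whose dimension of partial derivatives is exactly $w$, and let $A_1,\ldots,A_n \in \mathbb{C}^{w\times w}$ be the multiplication tables of the apolar ideal $f^{\perp} \subseteq \mathbb{C}[t_1,\ldots,t_n]$ of $f(t_1,\ldots,t_n)$. Define $$G(\mathbf{x},\mathbf{t}) := \prod_{i=1}^{n}\left(\sum_{k=0}^{d} \frac{1}{k!} t_i^k x_i^k\right).$$ Then there exists a vector $\mathbf{v}\in\mathbb{C}^w$ such that $$\sum_{j\in[w]} v_j \cdot G(x_1,\ldots,x_n,A_1,\ldots,A_n)[1,j] = f(\mathbf{x}),$$ where $G(\mathbf{x},A_1,\ldots,A_n)$ is the $w\times w$ matrix with entries in $\mathbb{C}[\mathbf{x}]$ obtained by substituting $A_i$ for $t_i$ (and the identity matrix for $1$), and $[1,j]$ denotes its $(1,j)$ entry.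
   Context: The dimension of partial derivatives of $f$ is $\dim_{\mathbb{C}}\mathrm{span}_{\mathbb{C}}\{\partial_{\mathbf{e}} f : \mathbf{e}\in\mathbb{N}^n\}$, where $\partial_{\mathbf{e}}$ is the partial derivative with respect to the monomial $\mathbf{x}^{\mathbf{e}}$ (with $\mathbf{e}=\mathbf{0}$ giving $f$). For $g = \sum_{\mathbf{e}} g_{\mathbf{e}}\mathbf{t}^{\mathbf{e}}$, the derivative operator $D_g := \sum_{\mathbf{e}} g_{\mathbf{e}} \partial_{\mathbf{e}}$. The apolar ideal $f^{\perp}\subseteq\mathbb{C}[\mathbf{t}]$ is the ideal generated by $\{h\in\mathbb{C}[\mathbf{t}] : D_h f(\mathbf{t}) \equiv 0\}$. Fix the degree-wise lexicographic monomial order on $\mathbb{C}[t_1,\ldots,t_n]$ with $t_1\prec t_2\prec\cdots\prec t_n$. The normal set of $f^{\perp}$ is the set of monomials that are not the leading monomial of any element of $f^{\perp}$; for $g\in\mathbb{C}[\mathbf{t}]$, $[g]$ denotes the unique polynomial supported on the normal set with $g-[g]\in f^{\perp}$. The normal set is finite with exactly $w$ elements; list them as $1 = m_1\prec m_2\prec\cdots\prec m_w$. The multiplication tables are the $w\times w$ matrices $A_\ell$, $\ell\in[n]$, with $A_\ell(i,j) :=$ the coefficient of $m_j$ in $[t_\ell\cdot m_i]$; these matrices pairwise commute. *)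

theory Defs
  imports Complex_Main "HOL-Library.Poly_Mapping" "Jordan_Normal_Form.Matrix"
begin

text \<open>Variable x_i (t_i) of the
  paper, i in [n], is the variable with index i-1 here.\<close>

type_synonym mono = "nat \<Rightarrow>\<^sub>0 nat"
type_synonym cpoly = "mono \<Rightarrow>\<^sub>0 complex"

definition const_poly :: "complex \<Rightarrow> cpoly" where
  "const_poly c = Poly_Mapping.single 0 c"

definition mono_poly :: "mono \<Rightarrow> cpoly" where
  "mono_poly m = Poly_Mapping.single m 1"

definition var_poly :: "nat \<Rightarrow> cpoly" where
  "var_poly i = mono_poly (Poly_Mapping.single i 1)"

definition tdeg :: "mono \<Rightarrow> nat" where
  "tdeg m = (\<Sum>i\<in>Poly_Mapping.keys m. Poly_Mapping.lookup m i)"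

definition in_vars :: "nat \<Rightarrow> cpoly \<Rightarrow> bool" where
  "in_vars n p \<longleftrightarrow> (\<forall>m\<in>Poly_Mapping.keys p. Poly_Mapping.keys m \<subseteq> {..<n})"

definition homogeneous :: "nat \<Rightarrow> cpoly \<Rightarrow> bool" where
  "homogeneous d p \<longleftrightarrow> (\<forall>m\<in>Poly_Mapping.keys p. tdeg m = d)"

definition mono_dvd :: "mono \<Rightarrow> mono \<Rightarrow> bool" where
  "mono_dvd e m \<longleftrightarrow> (\<forall>i. Poly_Mapping.lookup e i \<le> Poly_Mapping.lookup m i)"

definition pderiv_mono :: "mono \<Rightarrow> cpoly \<Rightarrow> cpoly" where
  "pderiv_mono e f =
     (\<Sum>m\<in>Poly_Mapping.keys f. if mono_dvd e m
        then Poly_Mapping.single (m - e)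
               (Poly_Mapping.lookup f m * of_nat (\<Prod>i\<in>Poly_Mapping.keys m. fact (Poly_Mapping.lookup m i) div fact (Poly_Mapping.lookup m i - Poly_Mapping.lookup e i)))
        else 0)"

definition deriv_op :: "cpoly \<Rightarrow> cpoly \<Rightarrow> cpoly" where
  "deriv_op g f = (\<Sum>e\<in>Poly_Mapping.keys g. const_poly (Poly_Mapping.lookup g e) * pderiv_mono e f)"

definition cscale :: "complex \<Rightarrow> cpoly \<Rightarrow> cpoly" where
  "cscale c p = const_poly c * p"

definition dim_partials :: "cpoly \<Rightarrow> nat" where
  "dim_partials f = vector_space.dim cscale {pderiv_mono e f | e. True}"

definition poly_ring :: "nat \<Rightarrow> cpoly set" where
  "poly_ring n = {p. in_vars n p}"

definition is_ideal :: "nat \<Rightarrow> cpoly set \<Rightarrow> bool" where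
  "is_ideal n I \<longleftrightarrow> I \<subseteq> poly_ring n \<and> 0 \<in> I \<and>
     (\<forall>a\<in>I. \<forall>b\<in>I. a + b \<in> I) \<and> (\<forall>r\<in>poly_ring n. \<forall>a\<in>I. r * a \<in> I)"

definition ideal_gen :: "nat \<Rightarrow> cpoly set \<Rightarrow> cpoly set" where
  "ideal_gen n S = \<Inter>{I. is_ideal n I \<and> S \<subseteq> I}"

definition apolar :: "nat \<Rightarrow> cpoly \<Rightarrow> cpoly set" where
  "apolar n f = ideal_gen n {h \<in> poly_ring n. deriv_op h f = 0}"

definition dlex_less :: "mono \<Rightarrow> mono \<Rightarrow> bool" where
  "dlex_less m m' \<longleftrightarrow> tdeg m < tdeg m' \<or>
     (tdeg m = tdeg m' \<and> (\<exists>i. Poly_Mapping.lookup m i < Poly_Mapping.lookup m' i \<and> (\<forall>j>i. Poly_Mapping.lookup m j = Poly_Mapping.lookup m' j)))"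

definition dlex_le :: "mono \<Rightarrow> mono \<Rightarrow> bool" where
  "dlex_le m m' \<longleftrightarrow> m = m' \<or> dlex_less m m'"

definition is_lead_mono :: "mono \<Rightarrow> cpoly \<Rightarrow> bool" where
  "is_lead_mono m g \<longleftrightarrow> m \<in> Poly_Mapping.keys g \<and> (\<forall>m'\<in>Poly_Mapping.keys g. dlex_le m' m)"

definition normal_set :: "nat \<Rightarrow> cpoly \<Rightarrow> mono set" where
  "normal_set n f = {m. Poly_Mapping.keys m \<subseteq> {..<n} \<and>
      \<not> (\<exists>g\<in>apolar n f. g \<noteq> 0 \<and> is_lead_mono m g)}"

definition normal_form :: "nat \<Rightarrow> cpoly \<Rightarrow> cpoly \<Rightarrow> cpoly" where
  "normal_form n f g = (THE r. Poly_Mapping.keys r \<subseteq> normal_set n f \<and> g - r \<in> apolar n f)"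

definition normal_mono :: "nat \<Rightarrow> cpoly \<Rightarrow> nat \<Rightarrow> mono" where
  "normal_mono n f k = (THE m. m \<in> normal_set n f \<and>
       card {m' \<in> normal_set n f. dlex_less m' m} = k)"

text \<open>Multiplication table A_l (l = 0..n-1 standing for t_1..t_n), as a w x w matrix with
  0-based indices: A_l(i,j) = coefficient of m_j in [t_l * m_i].\<close>
definition mult_table :: "nat \<Rightarrow> cpoly \<Rightarrow> nat \<Rightarrow> nat \<Rightarrow> complex mat" where
  "mult_table n f w l = mat w w (\<lambda>(i,j).
      Poly_Mapping.lookup (normal_form n f (var_poly l * mono_poly (normal_mono n f i))) (normal_mono n f j))"

definition lift_mat :: "complex mat \<Rightarrow> cpoly mat" where
  "lift_mat M = map_mat const_poly M"

definition G_factor :: "nat \<Rightarrow> nat \<Rightarrow> complex mat \<Rightarrow> nat \<Rightarrow> cpoly mat" where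
  "G_factor w d Ai i = foldr (+)
     (map (\<lambda>k. (const_poly (1 / fact k) * var_poly i ^ k) \<cdot>\<^sub>m lift_mat (Ai ^\<^sub>m k)) [0..<Suc d])
     (0\<^sub>m w w)"

definition G_subst :: "nat \<Rightarrow> nat \<Rightarrow> nat \<Rightarrow> (nat \<Rightarrow> complex mat) \<Rightarrow> cpoly mat" where
  "G_subst n w d A = foldr (*) (map (\<lambda>i. G_factor w d (A i) i) [0..<n]) (1\<^sub>m w)"

end

theory Submission
  imports Defs
begin

abbreviation lk :: "('a \<Rightarrow>\<^sub>0 'b::zero) \<Rightarrow> 'a \<Rightarrow> 'b" where "lk \<equiv> Poly_Mapping.lookup"
abbreviation ks :: "('a \<Rightarrow>\<^sub>0 'b::zero) \<Rightarrow> 'a set" where "ks \<equiv> Poly_Mapping.keys"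

lemma lookup_const_mult: "lk (const_poly c * p) k = c * lk p k"
  unfolding const_poly_def mult_map_scale_conv_mult[symmetric]
  by (simp add: Poly_Mapping.map.rep_eq when_def)

lemma poly_expand: "(p::'a \<Rightarrow>\<^sub>0 'b::comm_monoid_add) = (\<Sum>k\<in>ks p. Poly_Mapping.single k (lk p k))"
  by (rule poly_mapping_eqI) (auto simp: lookup_sum lookup_single when_def in_keys_iff)

definition mfact :: "mono \<Rightarrow> complex" where
  "mfact m = (\<Prod>i\<in>ks m. fact (lk m i))"

lemma mfact_superset: "finite S \<Longrightarrow> ks m \<subseteq> S \<Longrightarrow> mfact m = (\<Prod>i\<in>S. fact (lk m i))"
  unfolding mfact_def
  by (rule prod.mono_neutral_left) (auto simp: in_keys_iff)

lemma mfact_nz: "mfact m \<noteq> 0"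
  unfolding mfact_def by (simp add: prod_zero_iff)

lemma mfact_zero[simp]: "mfact 0 = 1"
  by (simp add: mfact_def)

lemma keys_add_nat: "ks ((a::mono) + b) = ks a \<union> ks b"
  by (auto simp: in_keys_iff lookup_add)

lemma mono_dvd_iff: "mono_dvd e m \<longleftrightarrow> (\<exists>c. m = c + e)"
proof
  assume "mono_dvd e m"
  hence "m = (m - e) + e"
    by (intro poly_mapping_eqI) (auto simp: mono_dvd_def lookup_add lookup_minus)
  thus "\<exists>c. m = c + e" by blast
qed (auto simp: mono_dvd_def lookup_add)

lemma pderiv_lookup:
  "lk (pderiv_mono e f) c * mfact c = lk f (c + e) * mfact (c + e)"
proof -
  define cf where "cf m = (of_nat (\<Prod>i\<in>ks m. fact (lk m i) div fact (lk m i - lk e i)) :: complex)" for m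
  have terms: "lk (if mono_dvd e m then Poly_Mapping.single (m - e) (lk f m * cf m) else 0) c
      = (if m = c + e then lk f m * cf m else 0)" for m
  proof (cases "m = c + e")
    case True
    then show ?thesis by (auto simp: mono_dvd_iff)
  next
    case False
    have "mono_dvd e m \<Longrightarrow> m - e \<noteq> c"
    proof
      assume "mono_dvd e m" "m - e = c"
      then obtain c' where "m = c' + e" by (auto simp: mono_dvd_iff)
      with \<open>m - e = c\<close> have "c' = c" by simp
      with \<open>m = c' + e\<close> False show False by simp
    qed
    then show ?thesis using False by (auto simp: lookup_single when_def)
  qed
  have "lk (pderiv_mono e f) c = (\<Sum>m\<in>ks f. if m = c + e then lk f m * cf m else 0)"
    unfolding pderiv_mono_def lookup_sum cf_def[symmetric] using terms by simp
  also have "\<dots> = lk f (c + e) * cf (c + e)"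
    by (auto simp: in_keys_iff)
  finally have 1: "lk (pderiv_mono e f) c = lk f (c + e) * cf (c + e)" .
  have "cf (c + e) * mfact c = mfact (c + e)"
  proof -
    let ?S = "ks (c + e)"
    have "mfact c = (\<Prod>i\<in>?S. fact (lk c i))"
      by (rule mfact_superset) (auto simp: keys_add_nat)
    moreover have "cf (c + e) = (\<Prod>i\<in>?S. of_nat (fact (lk c i + lk e i) div fact (lk c i)))"
      unfolding cf_def by (simp add: lookup_add)
    ultimately have "cf (c + e) * mfact c = (\<Prod>i\<in>?S. of_nat (fact (lk c i + lk e i) div fact (lk c i)) * fact (lk c i))"
      by (simp add: prod.distrib)
    also have "\<dots> = (\<Prod>i\<in>?S. fact (lk c i + lk e i))"
    proof (rule prod.cong[OF refl])
      fix i
      have "fact (lk c i) dvd (fact (lk c i + lk e i) :: nat)" by (simp add: fact_dvd)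
      hence "(fact (lk c i + lk e i) div fact (lk c i)) * fact (lk c i) = (fact (lk c i + lk e i) :: nat)"
        by simp
      hence "of_nat ((fact (lk c i + lk e i) div fact (lk c i)) * fact (lk c i)) = (of_nat (fact (lk c i + lk e i)) :: complex)"
        by metis
      thus "of_nat (fact (lk c i + lk e i) div fact (lk c i)) * fact (lk c i) = (fact (lk c i + lk e i) :: complex)"
        by (simp only: of_nat_mult of_nat_fact)
    qed
    also have "\<dots> = mfact (c + e)"
      by (simp add: mfact_def lookup_add)
    finally show ?thesis .
  qed
  with 1 show ?thesis by simp
qed


definition wsum :: "cpoly \<Rightarrow> (mono \<Rightarrow> complex) \<Rightarrow> complex" where
  "wsum h \<phi> = (\<Sum>e\<in>ks h. lk h e * \<phi> e)"

lemma wsum_superset: "finite S \<Longrightarrow> ks h \<subseteq> S \<Longrightarrow> wsum h \<phi> = (\<Sum>e\<in>S. lk h e * \<phi> e)"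
  unfolding wsum_def by (rule sum.mono_neutral_left) (auto simp: in_keys_iff)

lemma wsum_add: "wsum (a + b) \<phi> = wsum a \<phi> + wsum b \<phi>"
proof -
  let ?S = "ks a \<union> ks b"
  have "wsum (a + b) \<phi> = (\<Sum>e\<in>?S. lk (a + b) e * \<phi> e)"
    by (rule wsum_superset) (use keys_add[of a b] in auto)
  also have "\<dots> = (\<Sum>e\<in>?S. lk a e * \<phi> e) + (\<Sum>e\<in>?S. lk b e * \<phi> e)"
    by (simp add: lookup_add distrib_right sum.distrib)
  also have "\<dots> = wsum a \<phi> + wsum b \<phi>"
    by (simp add: wsum_superset[of ?S a] wsum_superset[of ?S b])
  finally show ?thesis .
qed

lemma wsum_zero[simp]: "wsum 0 \<phi> = 0"
  by (simp add: wsum_def)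

lemma wsum_uminus: "wsum (- a) \<phi> = - wsum a \<phi>"
  by (simp add: wsum_def keys_minus sum_negf)

lemma wsum_diff: "wsum (a - b) \<phi> = wsum a \<phi> - wsum b \<phi>"
  using wsum_add[of a "- b" \<phi>] by (simp add: wsum_uminus)

lemma wsum_single[simp]: "wsum (Poly_Mapping.single e x) \<phi> = x * \<phi> e"
  by (simp add: wsum_def)

lemma wsum_sum: "finite I \<Longrightarrow> wsum (\<Sum>i\<in>I. p i) \<phi> = (\<Sum>i\<in>I. wsum (p i) \<phi>)"
  by (induction I rule: finite_induct) (auto simp: wsum_add)

lemma wsum_const_mult: "wsum (const_poly c * h) \<phi> = c * wsum h \<phi>"
proof -
  have "wsum (const_poly c * h) \<phi> = (\<Sum>e\<in>ks h. lk (const_poly c * h) e * \<phi> e)"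
    by (rule wsum_superset) (auto simp: in_keys_iff lookup_const_mult)
  thus ?thesis by (simp add: lookup_const_mult wsum_def sum_distrib_left mult.assoc)
qed

lemma wsum_cong: "(\<And>e. e \<in> ks h \<Longrightarrow> \<phi> e = \<psi> e) \<Longrightarrow> wsum h \<phi> = wsum h \<psi>"
  by (simp add: wsum_def)

lemma wsum_mult: "wsum (r * a) \<phi> = wsum r (\<lambda>b. wsum a (\<lambda>e. \<phi> (b + e)))"
proof -
  have "r * a = (\<Sum>b\<in>ks r. Poly_Mapping.single b (lk r b)) * (\<Sum>e\<in>ks a. Poly_Mapping.single e (lk a e))"
    by (simp flip: poly_expand)
  also have "\<dots> = (\<Sum>b\<in>ks r. \<Sum>e\<in>ks a. Poly_Mapping.single (b + e) (lk r b * lk a e))"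
    by (simp add: sum_product mult_single)
  finally have "wsum (r * a) \<phi> = (\<Sum>b\<in>ks r. \<Sum>e\<in>ks a. lk r b * lk a e * \<phi> (b + e))"
    by (simp add: wsum_sum)
  also have "\<dots> = wsum r (\<lambda>b. wsum a (\<lambda>e. \<phi> (b + e)))"
    by (simp add: wsum_def sum_distrib_left mult.assoc)
  finally show ?thesis .
qed

definition FF :: "cpoly \<Rightarrow> mono \<Rightarrow> complex" where
  "FF f m = lk f m * mfact m"

definition Dz :: "cpoly \<Rightarrow> cpoly \<Rightarrow> mono \<Rightarrow> complex" where
  "Dz f h c = wsum h (\<lambda>e. FF f (c + e))"

lemma deriv_op_lookup: "lk (deriv_op h f) c * mfact c = Dz f h c"
proof -
  have "lk (deriv_op h f) c * mfact c = (\<Sum>e\<in>ks h. lk h e * (lk (pderiv_mono e f) c * mfact c))"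
    by (simp add: deriv_op_def lookup_sum lookup_const_mult sum_distrib_right mult.assoc)
  also have "\<dots> = Dz f h c"
    by (simp add: pderiv_lookup Dz_def wsum_def FF_def add.commute)
  finally show ?thesis .
qed

lemma deriv_op_zero_iff: "deriv_op h f = 0 \<longleftrightarrow> (\<forall>c. Dz f h c = 0)"
proof
  assume "deriv_op h f = 0" thus "\<forall>c. Dz f h c = 0"
    using deriv_op_lookup[of h f] by (metis lookup_zero mult_zero_left)
next
  assume "\<forall>c. Dz f h c = 0"
  hence "lk (deriv_op h f) c = 0" for c
    using deriv_op_lookup[of h f c] mfact_nz[of c] by simp
  thus "deriv_op h f = 0" by (intro poly_mapping_eqI) simp
qed

lemma Dz_mult: "Dz f (r * a) c = wsum r (\<lambda>b. Dz f a (c + b))"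
  by (simp add: Dz_def wsum_mult add.assoc)

lemma Dz_add: "Dz f (a + b) c = Dz f a c + Dz f b c"
  by (simp add: Dz_def wsum_add)
lemma Dz_diff: "Dz f (a - b) c = Dz f a c - Dz f b c"
  by (simp add: Dz_def wsum_diff)
lemma Dz_const_mult: "Dz f (const_poly x * a) c = x * Dz f a c"
  by (simp add: Dz_def wsum_const_mult)


lemma in_vars_mult: "in_vars n r \<Longrightarrow> in_vars n a \<Longrightarrow> in_vars n (r * a)"
  unfolding in_vars_def using keys_mult[of r a] by (force simp: keys_add_nat)

lemma in_vars_add: "in_vars n r \<Longrightarrow> in_vars n a \<Longrightarrow> in_vars n (r + a)"
  unfolding in_vars_def using keys_add[of r a] by blast

lemma in_vars_uminus: "in_vars n a \<Longrightarrow> in_vars n (- a)"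
  unfolding in_vars_def by (simp add: keys_minus)

lemma in_vars_diff: "in_vars n r \<Longrightarrow> in_vars n a \<Longrightarrow> in_vars n (r - a)"
  using in_vars_add[OF _ in_vars_uminus, of n r a] by simp

lemma in_vars_zero[simp]: "in_vars n 0"
  by (simp add: in_vars_def)

lemma in_vars_single: "ks m \<subseteq> {..<n} \<Longrightarrow> in_vars n (Poly_Mapping.single m x)"
  by (simp add: in_vars_def)

lemma in_vars_const: "in_vars n (const_poly x)"
  by (simp add: in_vars_def const_poly_def)

lemma in_vars_sum: "finite I \<Longrightarrow> (\<And>i. i \<in> I \<Longrightarrow> in_vars n (p i)) \<Longrightarrow> in_vars n (\<Sum>i\<in>I. p i)"
  by (induction I rule: finite_induct) (auto intro: in_vars_add)

definition Kset :: "nat \<Rightarrow> cpoly \<Rightarrow> cpoly set" where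
  "Kset n f = {h. in_vars n h \<and> (\<forall>c. Dz f h c = 0)}"

lemma Kset_ideal: "is_ideal n (Kset n f)"
  unfolding is_ideal_def
proof (intro conjI ballI)
  show "Kset n f \<subseteq> poly_ring n" by (auto simp: Kset_def poly_ring_def)
  show "0 \<in> Kset n f" by (simp add: Kset_def Dz_def)
  show "a + b \<in> Kset n f" if "a \<in> Kset n f" "b \<in> Kset n f" for a b
    using that by (auto simp: Kset_def Dz_add in_vars_add)
  show "r * a \<in> Kset n f" if "r \<in> poly_ring n" "a \<in> Kset n f" for r a
    using that by (auto simp: Kset_def Dz_mult in_vars_mult poly_ring_def wsum_def)
qed

lemma apolar_eq: "apolar n f = Kset n f"
proof -
  have gen: "{h \<in> poly_ring n. deriv_op h f = 0} = Kset n f"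
    by (auto simp: Kset_def poly_ring_def deriv_op_zero_iff)
  show ?thesis unfolding apolar_def ideal_gen_def gen
    using Kset_ideal[of n f] by blast
qed

lemma Kset_diff: "a \<in> Kset n f \<Longrightarrow> b \<in> Kset n f \<Longrightarrow> a - b \<in> Kset n f"
  by (auto simp: Kset_def Dz_diff in_vars_diff)

lemma Kset_add: "a \<in> Kset n f \<Longrightarrow> b \<in> Kset n f \<Longrightarrow> a + b \<in> Kset n f"
  by (auto simp: Kset_def Dz_add in_vars_add)

lemma Kset_mult: "in_vars n r \<Longrightarrow> a \<in> Kset n f \<Longrightarrow> r * a \<in> Kset n f"
  using Kset_ideal[of n f] by (auto simp: is_ideal_def poly_ring_def)

lemma Kset_const_mult: "a \<in> Kset n f \<Longrightarrow> const_poly x * a \<in> Kset n f"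
  by (rule Kset_mult[OF in_vars_const])


lemma tdeg_superset: "finite S \<Longrightarrow> ks m \<subseteq> S \<Longrightarrow> tdeg m = (\<Sum>i\<in>S. lk m i)"
  unfolding tdeg_def by (rule sum.mono_neutral_left) (auto simp: in_keys_iff)

lemma tdeg_add: "tdeg (a + b) = tdeg a + tdeg b"
proof -
  let ?S = "ks a \<union> ks b"
  have "tdeg (a + b) = (\<Sum>i\<in>?S. lk (a + b) i)" by (rule tdeg_superset) (auto simp: keys_add_nat)
  also have "\<dots> = (\<Sum>i\<in>?S. lk a i) + (\<Sum>i\<in>?S. lk b i)" by (simp add: lookup_add sum.distrib)
  also have "\<dots> = tdeg a + tdeg b" by (simp add: tdeg_superset[of ?S a] tdeg_superset[of ?S b])
  finally show ?thesis .
qed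

lemma lookup_le_tdeg: "lk m i \<le> tdeg m"
proof (cases "i \<in> ks m")
  case True
  thus ?thesis unfolding tdeg_def by (intro member_le_sum) auto
qed (simp add: in_keys_iff)

lemma tdeg_zero_iff: "tdeg m = 0 \<longleftrightarrow> m = 0"
proof
  assume "tdeg m = 0"
  hence "lk m i = 0" for i using lookup_le_tdeg[of m i] by simp
  thus "m = 0" by (intro poly_mapping_eqI) simp
qed (simp add: tdeg_def)

lemma tdeg_0[simp]: "tdeg 0 = 0" by (simp add: tdeg_def)

lemma tdeg_single[simp]: "tdeg (Poly_Mapping.single i k) = k"
  by (simp add: tdeg_def)

lemma finite_monos: "finite {m :: mono. ks m \<subseteq> {..<n} \<and> tdeg m \<le> D}"
proof -
  let ?S = "{m :: mono. ks m \<subseteq> {..<n} \<and> tdeg m \<le> D}"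
  let ?g = "\<lambda>m::mono. restrict (lk m) {..<n}"
  have "inj_on ?g ?S"
  proof
    fix a b assume a: "a \<in> ?S" and b: "b \<in> ?S" and eq: "?g a = ?g b"
    show "a = b"
    proof (rule poly_mapping_eqI)
      fix i
      show "lk a i = lk b i"
      proof (cases "i < n")
        case True thus ?thesis using fun_cong[OF eq, of i] by simp
      next
        case False
        hence "i \<notin> ks a" "i \<notin> ks b" using a b by auto
        thus ?thesis by (simp add: in_keys_iff)
      qed
    qed
  qed
  have "?g ` ?S \<subseteq> PiE {..<n} (\<lambda>_. {0..D})"
  proof (rule image_subsetI)
    fix m assume "m \<in> ?S"
    hence "lk m i \<in> {0..D}" for i using lookup_le_tdeg[of m i] by auto
    thus "?g m \<in> PiE {..<n} (\<lambda>_. {0..D})" by (simp add: restrict_PiE_iff)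
  qed
  moreover have "finite (PiE {..<n} (\<lambda>_. {0..D::nat}))" by (intro finite_PiE) auto
  ultimately have "finite (?g ` ?S)" by (rule finite_subset)
  thus ?thesis using \<open>inj_on ?g ?S\<close> by (rule finite_imageD)
qed

lemma dlex_irrefl: "\<not> dlex_less m m"
  by (auto simp: dlex_less_def)

lemma dlex_trans: "dlex_less a b \<Longrightarrow> dlex_less b c \<Longrightarrow> dlex_less a c"
proof -
  assume ab: "dlex_less a b" and bc: "dlex_less b c"
  show ?thesis
  proof (cases "tdeg a < tdeg b \<or> tdeg b < tdeg c")
    case True
    moreover have "tdeg a \<le> tdeg b" "tdeg b \<le> tdeg c" using ab bc by (auto simp: dlex_less_def)
    ultimately have "tdeg a < tdeg c" by linarith
    thus ?thesis by (simp add: dlex_less_def)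
  next
    case False
    hence deg: "tdeg a = tdeg c" using ab bc unfolding dlex_less_def by linarith
    from False ab obtain i where
      i1: "lk a i < lk b i" and i2: "\<And>k. k > i \<Longrightarrow> lk a k = lk b k"
      unfolding dlex_less_def by blast
    from False bc obtain j where
      j1: "lk b j < lk c j" and j2: "\<And>k. k > j \<Longrightarrow> lk b k = lk c k"
      unfolding dlex_less_def by blast
    define l where "l = max i j"
    have l1: "lk a l < lk c l"
    proof (cases "i < j")
      case True thus ?thesis using i2[of j] j1 l_def by simp
    next
      case False
      thus ?thesis
      proof (cases "i = j")
        case True thus ?thesis using i1 j1 l_def by simp
      next
        case False
        hence "j < i" using \<open>\<not> i < j\<close> by simp
        thus ?thesis using j2[of i] i1 l_def by simp
      qed
    qed
    have l2: "lk a k = lk c k" if "k > l" for k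
      using i2[of k] j2[of k] that l_def by simp
    show ?thesis unfolding dlex_less_def using deg l1 l2 by blast
  qed
qed

lemma dlex_total: "a \<noteq> b \<Longrightarrow> dlex_less a b \<or> dlex_less b a"
proof -
  assume ne: "a \<noteq> b"
  show ?thesis
  proof (cases "tdeg a = tdeg b")
    case False thus ?thesis by (auto simp: dlex_less_def)
  next
    case True
    let ?D = "{i. lk a i \<noteq> lk b i}"
    have fin: "finite ?D"
      by (rule finite_subset[of _ "ks a \<union> ks b"]) (auto simp: in_keys_iff)
    have nemp: "?D \<noteq> {}"
    proof
      assume "?D = {}"
      hence "lk a i = lk b i" for i by blast
      hence "a = b" by (rule poly_mapping_eqI)
      thus False using ne by simp
    qed
    define i where "i = Max ?D"
    have iD: "lk a i \<noteq> lk b i" using fin nemp i_def Max_in by blast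
    have above: "lk a k = lk b k" if "k > i" for k
    proof (rule ccontr)
      assume "lk a k \<noteq> lk b k"
      hence "k \<le> i" using Max_ge[OF fin, of k] i_def by simp
      thus False using that by simp
    qed
    show ?thesis
    proof (cases "lk a i < lk b i")
      case True
      hence "dlex_less a b" unfolding dlex_less_def using \<open>tdeg a = tdeg b\<close> above by blast
      thus ?thesis ..
    next
      case False
      hence "lk b i < lk a i" using iD by simp
      hence "dlex_less b a" unfolding dlex_less_def using \<open>tdeg a = tdeg b\<close> above by (metis (no_types))
      thus ?thesis ..
    qed
  qed
qed

lemma dlex_less_tdeg: "dlex_less a b \<Longrightarrow> tdeg a \<le> tdeg b"
  by (auto simp: dlex_less_def)

lemma dlex_max:
  assumes "finite S" "S \<noteq> {}"
  shows "\<exists>m\<in>S. \<forall>m'\<in>S. dlex_le m' m"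
  using assms
proof (induction S rule: finite_ne_induct)
  case (singleton x) thus ?case by (simp add: dlex_le_def)
next
  case (insert x F)
  then obtain m where m: "m \<in> F" "\<forall>m'\<in>F. dlex_le m' m" by blast
  show ?case
  proof (cases "dlex_less m x")
    case True
    hence "\<forall>m'\<in>insert x F. dlex_le m' x"
      using m by (auto simp: dlex_le_def intro: dlex_trans)
    thus ?thesis by blast
  next
    case False
    hence "dlex_le x m" using dlex_total[of m x] by (auto simp: dlex_le_def)
    thus ?thesis using m by blast
  qed
qed

definition below :: "nat \<Rightarrow> mono \<Rightarrow> mono set" where
  "below n M = {m. ks m \<subseteq> {..<n} \<and> dlex_less m M}"

lemma finite_below: "finite (below n M)"
  by (rule finite_subset[OF _ finite_monos[of n "tdeg M"]]) (auto simp: below_def dlex_less_tdeg)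

lemma dlex_induct[consumes 1]:
  assumes "ks M \<subseteq> {..<n}"
  and step: "\<And>M. ks M \<subseteq> {..<n} \<Longrightarrow> (\<And>M'. ks M' \<subseteq> {..<n} \<Longrightarrow> dlex_less M' M \<Longrightarrow> P M') \<Longrightarrow> P M"
  shows "P M"
  using assms(1)
proof (induction "card (below n M)" arbitrary: M rule: less_induct)
  case less
  show ?case
  proof (rule step[OF less.prems])
    fix M' assume M': "ks M' \<subseteq> {..<n}" "dlex_less M' M"
    have "below n M' \<subset> below n M"
    proof
      show "below n M' \<subseteq> below n M" using M' by (auto simp: below_def intro: dlex_trans)
      show "below n M' \<noteq> below n M" using M' dlex_irrefl unfolding below_def by blast
    qed
    hence "card (below n M') < card (below n M)" by (rule psubset_card_mono[OF finite_below])
    thus "P M'" using less.hyps M'(1) by blast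
  qed
qed


lemma keys_diff_sub: "ks ((a::cpoly) - b) \<subseteq> ks a \<union> ks b"
  by (auto simp: in_keys_iff lookup_minus)

lemma keys_const_mult: "ks (const_poly c * h) \<subseteq> ks h"
  by (auto simp: in_keys_iff lookup_const_mult)

lemma lead_exists: "h \<noteq> 0 \<Longrightarrow> \<exists>m. is_lead_mono m h"
  using dlex_max[of "ks h"] by (auto simp: is_lead_mono_def)

lemma normal_set_iff: "m \<in> normal_set n f \<longleftrightarrow>
   ks m \<subseteq> {..<n} \<and> \<not> (\<exists>g\<in>Kset n f. g \<noteq> 0 \<and> is_lead_mono m g)"
  by (simp add: normal_set_def apolar_eq)

lemma normal_unique:
  assumes "ks r \<subseteq> normal_set n f" "ks r' \<subseteq> normal_set n f" "r - r' \<in> Kset n f"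
  shows "r = r'"
proof (rule ccontr)
  assume "r \<noteq> r'"
  hence "r - r' \<noteq> 0" by simp
  then obtain m where m: "is_lead_mono m (r - r')" using lead_exists by blast
  hence "m \<in> normal_set n f" using keys_diff_sub[of r r'] assms(1,2) by (auto simp: is_lead_mono_def)
  thus False using m assms(3) \<open>r - r' \<noteq> 0\<close> by (auto simp: normal_set_iff)
qed

lemma normal_exists_aux:
  assumes "ks M \<subseteq> {..<n}"
  shows "\<forall>g. in_vars n g \<longrightarrow> (\<forall>m \<in> ks g - normal_set n f. dlex_le m M) \<longrightarrow>
     (\<exists>r. ks r \<subseteq> normal_set n f \<and> g - r \<in> Kset n f)"
  using assms
proof (induction M rule: dlex_induct[where n = n])
  case (1 M)
  show ?case
  proof (intro allI impI)
    fix g assume g: "in_vars n g" and gM: "\<forall>m \<in> ks g - normal_set n f. dlex_le m M"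
    show "\<exists>r. ks r \<subseteq> normal_set n f \<and> g - r \<in> Kset n f"
    proof (cases "ks g - normal_set n f = {}")
      case True
      hence "ks g \<subseteq> normal_set n f" by blast
      moreover have "g - g \<in> Kset n f" using Kset_ideal[of n f] by (simp add: is_ideal_def)
      ultimately show ?thesis by blast
    next
      case False
      then obtain M0 where M0: "M0 \<in> ks g - normal_set n f" "\<forall>m\<in>ks g - normal_set n f. dlex_le m M0"
        using dlex_max[of "ks g - normal_set n f"] by auto
      have M0n: "ks M0 \<subseteq> {..<n}" using M0(1) g by (auto simp: in_vars_def)
      then obtain h where h: "h \<in> Kset n f" "h \<noteq> 0" "is_lead_mono M0 h"
        using M0(1) by (auto simp: normal_set_iff)
      have hM0: "lk h M0 \<noteq> 0" using h(3) by (simp add: is_lead_mono_def in_keys_iff)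
      define c where "c = lk g M0 / lk h M0"
      define g' where "g' = g - const_poly c * h"
      have ch: "const_poly c * h \<in> Kset n f" by (rule Kset_const_mult[OF h(1)])
      have g'v: "in_vars n g'" unfolding g'_def
        using g ch by (auto simp: Kset_def intro: in_vars_diff)
      have g'M0: "lk g' M0 = 0" unfolding g'_def c_def using hM0
        by (simp add: lookup_minus lookup_const_mult)
      have less: "dlex_less m M0" if m: "m \<in> ks g' - normal_set n f" for m
      proof -
        have "m \<noteq> M0" using m g'M0 by (auto simp: in_keys_iff)
        moreover have "m \<in> ks g \<or> m \<in> ks h"
          using m keys_diff_sub[of g "const_poly c * h"] keys_const_mult[of c h] unfolding g'_def by blast
        hence "dlex_le m M0" using m M0(2) h(3) by (auto simp: is_lead_mono_def)
        ultimately show ?thesis by (simp add: dlex_le_def)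
      qed
      have gg': "g - g' \<in> Kset n f" using ch by (simp add: g'_def)
      show ?thesis
      proof (cases "ks g' - normal_set n f = {}")
        case True
        hence "ks g' \<subseteq> normal_set n f" by blast
        thus ?thesis using gg' by blast
      next
        case False
        then obtain M1 where M1: "M1 \<in> ks g' - normal_set n f" "\<forall>m\<in>ks g' - normal_set n f. dlex_le m M1"
          using dlex_max[of "ks g' - normal_set n f"] by auto
        have "dlex_less M1 M0" using less M1(1) by blast
        moreover have "dlex_le M0 M" using gM M0(1) by blast
        ultimately have "dlex_less M1 M" by (auto simp: dlex_le_def intro: dlex_trans)
        moreover have "ks M1 \<subseteq> {..<n}" using M1(1) g'v by (auto simp: in_vars_def)
        ultimately obtain r where r: "ks r \<subseteq> normal_set n f" "g' - r \<in> Kset n f"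
          using "1.IH"[of M1] g'v M1(2) by blast
        have "g - r = (g' - r) + (g - g')" by simp
        hence "g - r \<in> Kset n f" using Kset_add[OF r(2) gg'] by simp
        thus ?thesis using r(1) by blast
      qed
    qed
  qed
qed

lemma normal_exists:
  assumes "in_vars n g"
  shows "\<exists>r. ks r \<subseteq> normal_set n f \<and> g - r \<in> Kset n f"
proof (cases "ks g - normal_set n f = {}")
  case True
  hence "ks g \<subseteq> normal_set n f" by blast
  moreover have "g - g \<in> Kset n f" using Kset_ideal[of n f] by (simp add: is_ideal_def)
  ultimately show ?thesis by blast
next
  case False
  then obtain M0 where M0: "M0 \<in> ks g - normal_set n f" "\<forall>m\<in>ks g - normal_set n f. dlex_le m M0"
    using dlex_max[of "ks g - normal_set n f"] by auto
  have "ks M0 \<subseteq> {..<n}" using M0(1) assms by (auto simp: in_vars_def)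
  from normal_exists_aux[OF this] assms M0(2) show ?thesis by blast
qed

lemma normal_form_spec:
  assumes "in_vars n g"
  shows "ks (normal_form n f g) \<subseteq> normal_set n f \<and> g - normal_form n f g \<in> Kset n f"
proof -
  obtain r where r: "ks r \<subseteq> normal_set n f" "g - r \<in> Kset n f" using normal_exists[OF assms] by blast
  have "normal_form n f g = r"
    unfolding normal_form_def apolar_eq
  proof (rule the_equality)
    show "ks r \<subseteq> normal_set n f \<and> g - r \<in> Kset n f" using r by blast
    fix r' assume r': "ks r' \<subseteq> normal_set n f \<and> g - r' \<in> Kset n f"
    have "r' - r = (g - r) - (g - r')" by simp
    moreover have "(g - r) - (g - r') \<in> Kset n f" using Kset_diff[OF r(2)] r' by blast
    ultimately have "r' - r \<in> Kset n f" by simp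
    thus "r' = r" using normal_unique r(1) r' by blast
  qed
  thus ?thesis using r by simp
qed

lemma normal_form_eq:
  assumes "ks r \<subseteq> normal_set n f" "g - r \<in> Kset n f" "in_vars n g"
  shows "normal_form n f g = r"
proof -
  have s: "ks (normal_form n f g) \<subseteq> normal_set n f" "g - normal_form n f g \<in> Kset n f"
    using normal_form_spec[OF assms(3)] by auto
  have "normal_form n f g - r = (g - r) - (g - normal_form n f g)" by simp
  moreover have "(g - r) - (g - normal_form n f g) \<in> Kset n f" using Kset_diff[OF assms(2) s(2)] .
  ultimately have "normal_form n f g - r \<in> Kset n f" by simp
  thus ?thesis using normal_unique s(1) assms(1) by blast
qed


lemma Kset_normal_zero: "h \<in> Kset n f \<Longrightarrow> ks h \<subseteq> normal_set n f \<Longrightarrow> h = 0"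
  using normal_unique[of h n f 0] by simp

lemma Dz_single: "Dz f (Poly_Mapping.single m x) c = x * FF f (c + m)"
  by (simp add: Dz_def)

lemma FF_pderiv: "FF f (c + m) = lk (pderiv_mono m f) c * mfact c"
  by (simp add: FF_def pderiv_lookup)

lemma single_in_Kset:
  assumes "homogeneous d f" "ks m \<subseteq> {..<n}" "tdeg m > d"
  shows "Poly_Mapping.single m x \<in> Kset n f"
proof -
  have "FF f (c + m) = 0" for c
  proof -
    have "tdeg (c + m) \<noteq> d" using assms(3) by (simp add: tdeg_add)
    hence "c + m \<notin> ks f" using assms(1) by (auto simp: homogeneous_def)
    thus ?thesis by (simp add: FF_def in_keys_iff)
  qed
  thus ?thesis using assms(2) by (simp add: Kset_def Dz_single in_vars_single)
qed

lemma normal_set_bounded: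
  assumes "homogeneous d f"
  shows "normal_set n f \<subseteq> {m. ks m \<subseteq> {..<n} \<and> tdeg m \<le> d}"
proof
  fix m assume m: "m \<in> normal_set n f"
  hence mn: "ks m \<subseteq> {..<n}" by (simp add: normal_set_iff)
  show "m \<in> {m. ks m \<subseteq> {..<n} \<and> tdeg m \<le> d}"
  proof (rule ccontr)
    assume "m \<notin> {m. ks m \<subseteq> {..<n} \<and> tdeg m \<le> d}"
    hence "tdeg m > d" using mn by auto
    hence "Poly_Mapping.single m (1::complex) \<in> Kset n f" using single_in_Kset[OF assms mn] by blast
    moreover have "is_lead_mono m (Poly_Mapping.single m (1::complex))"
      by (simp add: is_lead_mono_def dlex_le_def)
    moreover have "Poly_Mapping.single m (1::complex) \<noteq> 0"
      by (metis lookup_single_eq lookup_zero zero_neq_one)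
    ultimately show False using m by (auto simp: normal_set_iff)
  qed
qed

lemma finite_normal_set: "homogeneous d f \<Longrightarrow> finite (normal_set n f)"
  using normal_set_bounded finite_monos finite_subset by metis

lemma zero_in_normal_set:
  assumes "f \<noteq> 0"
  shows "0 \<in> normal_set n f"
proof -
  have "\<not> is_lead_mono 0 h" if h: "h \<in> Kset n f" "h \<noteq> 0" for h
  proof
    assume lead: "is_lead_mono 0 h"
    have keys: "ks h = {0}"
    proof -
      have "m = 0" if "m \<in> ks h" for m
      proof -
        have "dlex_le m 0" using lead that by (auto simp: is_lead_mono_def)
        thus "m = 0" by (auto simp: dlex_le_def dlex_less_def tdeg_zero_iff)
      qed
      moreover have "0 \<in> ks h" using lead by (simp add: is_lead_mono_def)
      ultimately show ?thesis by blast
    qed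
    have "Dz f h c = lk h 0 * FF f c" for c by (simp add: Dz_def wsum_def keys)
    hence "lk h 0 * FF f c = 0" for c using h(1) unfolding Kset_def by (metis (mono_tags, lifting) mem_Collect_eq)
    moreover have "lk h 0 \<noteq> 0" using keys by (auto simp: in_keys_iff)
    ultimately have "FF f c = 0" for c by simp
    hence "lk f c = 0" for c by (simp add: FF_def mfact_nz)
    hence "f = 0" by (intro poly_mapping_eqI) simp
    thus False using assms by simp
  qed
  thus ?thesis by (auto simp: normal_set_iff)
qed

lemma poly_eq_mfact: "(\<And>c. lk p c * mfact c = lk q c * mfact c) \<Longrightarrow> p = q"
  by (intro poly_mapping_eqI) (simp add: mfact_nz)

lemma vs_cscale: "vector_space cscale"
  by unfold_locales
    (simp_all add: cscale_def const_poly_def distrib_left distrib_right single_add mult.assoc mult_single)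

lemma lookup_cscale: "lk (cscale a p) k = a * lk p k"
  by (simp add: cscale_def lookup_const_mult)

lemma pderiv_out:
  assumes "in_vars n f" "\<not> ks e \<subseteq> {..<n}"
  shows "pderiv_mono e f = 0"
proof (rule poly_eq_mfact)
  fix c
  have "c + e \<notin> ks f"
  proof
    assume "c + e \<in> ks f"
    hence "ks (c + e) \<subseteq> {..<n}" using assms(1) by (auto simp: in_vars_def)
    thus False using assms(2) by (auto simp: keys_add_nat)
  qed
  thus "lk (pderiv_mono e f) c * mfact c = lk 0 c * mfact c"
    by (simp add: pderiv_lookup in_keys_iff)
qed

lemma dim_partials_eq:
  assumes "in_vars n f" "homogeneous d f"
  shows "dim_partials f = card (normal_set n f)"
proof -
  interpret V: vector_space cscale by (rule vs_cscale)
  let ?N = "normal_set n f"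
  let ?pd = "\<lambda>m. pderiv_mono m f"
  let ?B = "?pd ` ?N"
  have finN: "finite ?N" by (rule finite_normal_set[OF assms(2)])
  have Nn: "ks m \<subseteq> {..<n}" if "m \<in> ?N" for m using that by (simp add: normal_set_iff)
  have Dz_sum: "Dz f (\<Sum>m\<in>?N. Poly_Mapping.single m (u m)) c = lk (\<Sum>m\<in>?N. cscale (u m) (?pd m)) c * mfact c" for u c
    by (simp add: Dz_def wsum_sum[OF finN] lookup_sum lookup_cscale sum_distrib_right FF_pderiv mult.assoc)
  have in_vars_sumN: "in_vars n (\<Sum>m\<in>?N. Poly_Mapping.single m (u m))" for u
    by (intro in_vars_sum[OF finN] in_vars_single Nn)
  have keys_sumN: "ks (\<Sum>m\<in>?N. Poly_Mapping.single m (u m)) \<subseteq> ?N" for u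
    using keys_sum[of "\<lambda>m. Poly_Mapping.single m (u m)" ?N] by (auto split: if_splits)
  have lookup_sumN: "lk (\<Sum>m\<in>?N. Poly_Mapping.single m (u m)) m' = (if m' \<in> ?N then u m' else 0)" for u m'
    using finN by (simp add: lookup_sum lookup_single when_def)
  have indep_core: "\<forall>m\<in>?N. u m = 0" if "(\<Sum>m\<in>?N. cscale (u m) (?pd m)) = 0" for u
  proof -
    let ?h = "\<Sum>m\<in>?N. Poly_Mapping.single m (u m)"
    have "?h \<in> Kset n f" using that by (simp add: Kset_def Dz_sum in_vars_sumN)
    hence "?h = 0" using Kset_normal_zero keys_sumN by blast
    thus ?thesis using lookup_sumN[of u] by (metis lookup_zero)
  qed
  have inj: "inj_on ?pd ?N"
  proof
    fix m1 m2 assume m: "m1 \<in> ?N" "m2 \<in> ?N" "?pd m1 = ?pd m2"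
    show "m1 = m2"
    proof (rule ccontr)
      assume ne: "m1 \<noteq> m2"
      define u where "u m = (if m = m1 then 1 else if m = m2 then -1 else (0::complex))" for m
      have "(\<Sum>m\<in>?N. cscale (u m) (?pd m)) = (\<Sum>m\<in>{m1, m2}. cscale (u m) (?pd m))"
        by (rule sum.mono_neutral_right[OF finN]) (use m in \<open>auto simp: u_def cscale_def const_poly_def\<close>)
      also have "\<dots> = 0" using ne m(3) by (simp add: u_def cscale_def const_poly_def single_uminus)
      finally have "\<forall>m\<in>?N. u m = 0" by (rule indep_core)
      hence "u m1 = 0" using m(1) by blast
      thus False by (simp add: u_def)
    qed
  qed
  have "V.dim {pderiv_mono e f | e. True} = card ?B"
  proof (rule V.dim_unique)
    show "?B \<subseteq> {pderiv_mono e f | e. True}" by blast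
    show "{pderiv_mono e f | e. True} \<subseteq> V.span ?B"
    proof clarify
      fix e
      show "?pd e \<in> V.span ?B"
      proof (cases "ks e \<subseteq> {..<n}")
        case False
        thus ?thesis using pderiv_out[OF assms(1) False] V.span_zero by simp
      next
        case True
        define r where "r = normal_form n f (Poly_Mapping.single e 1)"
        have r: "ks r \<subseteq> ?N" "Poly_Mapping.single e 1 - r \<in> Kset n f"
          using normal_form_spec[OF in_vars_single[OF True]] r_def by auto
        have "?pd e = (\<Sum>m\<in>ks r. cscale (lk r m) (?pd m))"
        proof (rule poly_eq_mfact)
          fix c
          have "Dz f (Poly_Mapping.single e 1 - r) c = 0" using r(2) by (simp add: Kset_def)
          hence "Dz f (Poly_Mapping.single e 1) c = Dz f r c" by (simp add: Dz_diff)
          thus "lk (?pd e) c * mfact c = lk (\<Sum>m\<in>ks r. cscale (lk r m) (?pd m)) c * mfact c"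
            by (simp add: Dz_single FF_pderiv Dz_def wsum_def lookup_sum lookup_cscale sum_distrib_right mult.assoc)
        qed
        also have "\<dots> \<in> V.span ?B"
          using r(1) by (intro V.span_sum V.span_scale V.span_base) auto
        finally show ?thesis .
      qed
    qed
    show "V.independent ?B"
    proof (rule V.independent_if_scalars_zero)
      show "finite ?B" using finN by simp
      fix u x assume s: "(\<Sum>x\<in>?B. cscale (u x) x) = 0" and x: "x \<in> ?B"
      have "(\<Sum>m\<in>?N. cscale ((u \<circ> ?pd) m) (?pd m)) = 0"
        using s by (simp add: sum.reindex[OF inj])
      hence "\<forall>m\<in>?N. (u \<circ> ?pd) m = 0" by (rule indep_core)
      thus "u x = 0" using x by auto
    qed
  qed (rule refl)
  thus ?thesis unfolding dim_partials_def using card_image[OF inj] by simp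
qed


definition rank :: "nat \<Rightarrow> cpoly \<Rightarrow> mono \<Rightarrow> nat" where
  "rank n f m = card {m' \<in> normal_set n f. dlex_less m' m}"

lemma not_dlex_less_zero: "\<not> dlex_less m 0"
  by (auto simp: dlex_less_def tdeg_zero_iff)

context
  fixes n :: nat and f :: cpoly
  assumes finN: "finite (normal_set n f)"
begin

lemma rank_less_card: "m \<in> normal_set n f \<Longrightarrow> rank n f m < card (normal_set n f)"
  unfolding rank_def
proof (rule psubset_card_mono[OF finN])
  assume m: "m \<in> normal_set n f"
  have "m \<notin> {m' \<in> normal_set n f. dlex_less m' m}" by (simp add: dlex_irrefl)
  thus "{m' \<in> normal_set n f. dlex_less m' m} \<subset> normal_set n f" using m by blast
qed

lemma rank_mono: "m1 \<in> normal_set n f \<Longrightarrow> m2 \<in> normal_set n f \<Longrightarrow> dlex_less m1 m2 \<Longrightarrow> rank n f m1 < rank n f m2"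
  unfolding rank_def
proof (rule psubset_card_mono)
  assume m: "m1 \<in> normal_set n f" "m2 \<in> normal_set n f" "dlex_less m1 m2"
  show "finite {m' \<in> normal_set n f. dlex_less m' m2}" using finN by simp
  have "m1 \<notin> {m' \<in> normal_set n f. dlex_less m' m1}" by (simp add: dlex_irrefl)
  moreover have "m1 \<in> {m' \<in> normal_set n f. dlex_less m' m2}" using m by simp
  moreover have "{m' \<in> normal_set n f. dlex_less m' m1} \<subseteq> {m' \<in> normal_set n f. dlex_less m' m2}"
    using m(3) by (auto intro: dlex_trans)
  ultimately show "{m' \<in> normal_set n f. dlex_less m' m1} \<subset> {m' \<in> normal_set n f. dlex_less m' m2}" by blast
qed

lemma rank_inj: "inj_on (rank n f) (normal_set n f)"
proof
  fix a b assume "a \<in> normal_set n f" "b \<in> normal_set n f" "rank n f a = rank n f b"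
  thus "a = b" using rank_mono dlex_total by (metis less_irrefl)
qed

lemma rank_image: "rank n f ` normal_set n f = {..<card (normal_set n f)}"
proof -
  have "rank n f ` normal_set n f \<subseteq> {..<card (normal_set n f)}" using rank_less_card by auto
  moreover have "card (rank n f ` normal_set n f) = card {..<card (normal_set n f)}"
    using card_image[OF rank_inj] by simp
  ultimately show ?thesis by (intro card_subset_eq) auto
qed

lemma normal_mono_rank: "m \<in> normal_set n f \<Longrightarrow> normal_mono n f (rank n f m) = m"
  unfolding normal_mono_def
proof (rule the_equality)
  fix m' assume m: "m \<in> normal_set n f" and m': "m' \<in> normal_set n f \<and> card {m'' \<in> normal_set n f. dlex_less m'' m'} = rank n f m"
  hence "rank n f m' = rank n f m" by (simp add: rank_def)
  thus "m' = m" using rank_inj m m' by (auto dest: inj_onD)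
qed (simp add: rank_def)

lemma normal_mono_in: "k < card (normal_set n f) \<Longrightarrow> normal_mono n f k \<in> normal_set n f \<and> rank n f (normal_mono n f k) = k"
proof -
  assume "k < card (normal_set n f)"
  then obtain m where m: "m \<in> normal_set n f" "rank n f m = k" using rank_image by (metis imageE lessThan_iff)
  thus ?thesis using normal_mono_rank by auto
qed

lemma normal_mono_bij: "bij_betw (normal_mono n f) {..<card (normal_set n f)} (normal_set n f)"
proof (rule bij_betw_byWitness[where f' = "rank n f"])
  show "\<forall>a\<in>{..<card (normal_set n f)}. rank n f (normal_mono n f a) = a" using normal_mono_in by auto
  show "\<forall>a'\<in>normal_set n f. normal_mono n f (rank n f a') = a'" using normal_mono_rank by auto
  show "normal_mono n f ` {..<card (normal_set n f)} \<subseteq> normal_set n f" using normal_mono_in by auto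
  show "rank n f ` normal_set n f \<subseteq> {..<card (normal_set n f)}" using rank_image by auto
qed

lemma normal_mono_zero: "0 \<in> normal_set n f \<Longrightarrow> normal_mono n f 0 = 0"
proof -
  assume "0 \<in> normal_set n f"
  moreover have "rank n f 0 = 0" by (simp add: rank_def not_dlex_less_zero)
  ultimately show ?thesis using normal_mono_rank by metis
qed

end


lemma const_poly_add: "const_poly (a + b) = const_poly a + const_poly b"
  by (simp add: const_poly_def single_add)
lemma const_poly_mult: "const_poly (a * b) = const_poly a * const_poly b"
  by (simp add: const_poly_def mult_single)
lemma const_poly_sum: "const_poly (\<Sum>i\<in>I. a i) = (\<Sum>i\<in>I. const_poly (a i))"
  by (induction I rule: infinite_finite_induct) (simp_all add: const_poly_def single_add)
lemma const_poly_one[simp]: "const_poly 1 = 1"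
  by (simp add: const_poly_def)
lemma const_poly_zero[simp]: "const_poly 0 = 0"
  by (simp add: const_poly_def)
lemma single_as_const: "Poly_Mapping.single m x = const_poly x * mono_poly m"
  by (simp add: const_poly_def mono_poly_def mult_single)

lemma Kset_sum: "finite I \<Longrightarrow> (\<And>i. i \<in> I \<Longrightarrow> p i \<in> Kset n f) \<Longrightarrow> (\<Sum>i\<in>I. p i) \<in> Kset n f"
proof (induction I rule: finite_induct)
  case empty thus ?case using Kset_ideal[of n f] by (simp add: is_ideal_def)
next
  case (insert x F) thus ?case by (simp add: Kset_add)
qed

lemma in_vars_var: "l < n \<Longrightarrow> in_vars n (var_poly l)"
  by (simp add: var_poly_def mono_poly_def in_vars_single)

lemma in_vars_mono: "ks m \<subseteq> {..<n} \<Longrightarrow> in_vars n (mono_poly m)"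
  by (simp add: mono_poly_def in_vars_single)

lemma in_vars_pow: "in_vars n p \<Longrightarrow> in_vars n (p ^ k)"
proof (induction k)
  case 0 thus ?case by (simp add: in_vars_def)
next
  case (Suc k) thus ?case by (simp add: in_vars_mult)
qed

lemma mult_entry:
  assumes "A \<in> carrier_mat w w" "B \<in> carrier_mat w w" "i < w" "j < w"
  shows "(A * B) $$ (i, j) = (\<Sum>k<w. A $$ (i, k) * B $$ (k, j))"
  using assms by (simp add: scalar_prod_def atLeast0LessThan)

lemma foldr_add_index:
  assumes "i < w" "j < w"
  shows "foldr (+) xs (0\<^sub>m w w) $$ (i, j) = (\<Sum>M\<leftarrow>xs. M $$ (i, j))"
    and "dim_row (foldr (+) xs (0\<^sub>m w w)) = w" "dim_col (foldr (+) xs (0\<^sub>m w w)) = w"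
proof -
  have dims: "dim_row (foldr (+) xs (0\<^sub>m w w)) = w \<and> dim_col (foldr (+) xs (0\<^sub>m w w)) = (w::nat)"
    by (induction xs) auto
  thus "dim_row (foldr (+) xs (0\<^sub>m w w)) = w" "dim_col (foldr (+) xs (0\<^sub>m w w)) = w" by auto
  show "foldr (+) xs (0\<^sub>m w w) $$ (i, j) = (\<Sum>M\<leftarrow>xs. M $$ (i, j))"
  proof (induction xs)
    case Nil thus ?case using assms by simp
  next
    case (Cons a xs)
    have "dim_row (foldr (+) xs (0\<^sub>m w w)) = w \<and> dim_col (foldr (+) xs (0\<^sub>m w w)) = (w::nat)"
      by (induction xs) auto
    thus ?case using Cons assms by simp
  qed
qed

primrec psi :: "cpoly \<Rightarrow> nat \<Rightarrow> nat \<Rightarrow> nat \<Rightarrow> cpoly \<Rightarrow> cpoly" where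
  "psi f d 0 s g = const_poly (Dz f g 0)"
| "psi f d (Suc k) s g = (\<Sum>e<Suc d. const_poly (1 / fact e) * var_poly s ^ e * psi f d k (Suc s) (var_poly s ^ e * g))"

lemma foldr_add_dims: "dim_row (foldr (+) xs (0\<^sub>m w w)) = w" "dim_col (foldr (+) xs (0\<^sub>m w w)) = (w::nat)"
  by (induction xs) auto

context
  fixes n d :: nat and f :: cpoly
  assumes fv: "in_vars n f" and fh: "homogeneous d f" and fnz: "f \<noteq> 0"
begin

abbreviation "NN \<equiv> normal_set n f"
abbreviation "ww \<equiv> card (normal_set n f)"
abbreviation "ms \<equiv> normal_mono n f"
abbreviation "nf \<equiv> normal_form n f"
abbreviation "AA \<equiv> mult_table n f (card (normal_set n f))"

definition pi :: "cpoly \<Rightarrow> nat \<Rightarrow> complex" where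
  "pi g j = lk (nf g) (ms j)"

lemma finNN: "finite NN" by (rule finite_normal_set[OF fh])

lemma ms_bij: "bij_betw ms {..<ww} NN" by (rule normal_mono_bij[OF finNN])

lemma ms_in: "i < ww \<Longrightarrow> ms i \<in> NN"
  using ms_bij by (auto simp: bij_betw_def)

lemma ms_vars: "i < ww \<Longrightarrow> ks (ms i) \<subseteq> {..<n}"
  using ms_in by (simp add: normal_set_iff)

lemma nf_expand:
  assumes "in_vars n g"
  shows "nf g = (\<Sum>i<ww. const_poly (pi g i) * mono_poly (ms i))"
proof -
  have k: "ks (nf g) \<subseteq> NN" using normal_form_spec[OF assms] by blast
  have "nf g = (\<Sum>m\<in>ks (nf g). Poly_Mapping.single m (lk (nf g) m))" by (rule poly_expand)
  also have "\<dots> = (\<Sum>m\<in>NN. Poly_Mapping.single m (lk (nf g) m))"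
    by (rule sum.mono_neutral_left[OF finNN k]) (simp add: in_keys_iff)
  also have "\<dots> = (\<Sum>i<ww. Poly_Mapping.single (ms i) (lk (nf g) (ms i)))"
    by (rule sum.reindex_bij_betw[OF ms_bij, symmetric])
  finally show ?thesis by (simp add: pi_def single_as_const)
qed

lemma AA_entry: "i < ww \<Longrightarrow> j < ww \<Longrightarrow> AA l $$ (i, j) = pi (var_poly l * mono_poly (ms i)) j"
  by (simp add: mult_table_def pi_def)

lemma AA_carrier: "AA l \<in> carrier_mat ww ww"
  by (simp add: mult_table_def)

lemma row_mult:
  assumes g: "in_vars n g" and l: "l < n" and j: "j < ww"
  shows "(\<Sum>i<ww. pi g i * AA l $$ (i, j)) = pi (var_poly l * g) j"
proof -
  let ?X = "var_poly l"
  let ?P = "\<lambda>i. ?X * mono_poly (ms i)"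
  define R where "R = (\<Sum>i<ww. const_poly (pi g i) * nf (?P i))"
  have invP: "in_vars n (?P i)" if "i < ww" for i
    using that by (intro in_vars_mult in_vars_var[OF l] in_vars_mono ms_vars)
  have specP: "ks (nf (?P i)) \<subseteq> NN" "?P i - nf (?P i) \<in> Kset n f" if "i < ww" for i
    using normal_form_spec[OF invP[OF that]] by auto
  have sg: "g - nf g \<in> Kset n f" using normal_form_spec[OF g] by blast
  have Xr: "?X * nf g = (\<Sum>i<ww. const_poly (pi g i) * ?P i)"
    by (simp add: nf_expand[OF g] sum_distrib_left mult.left_commute)
  have "?X * g - R = ?X * (g - nf g) + ((\<Sum>i<ww. const_poly (pi g i) * ?P i) - R)"
    by (simp add: Xr[symmetric] right_diff_distrib)
  also have "(\<Sum>i<ww. const_poly (pi g i) * ?P i) - R = (\<Sum>i<ww. const_poly (pi g i) * (?P i - nf (?P i)))"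
    by (simp add: R_def right_diff_distrib sum_subtractf)
  finally have "?X * g - R = ?X * (g - nf g) + (\<Sum>i<ww. const_poly (pi g i) * (?P i - nf (?P i)))" .
  moreover have "?X * (g - nf g) \<in> Kset n f" by (rule Kset_mult[OF in_vars_var[OF l] sg])
  moreover have "(\<Sum>i<ww. const_poly (pi g i) * (?P i - nf (?P i))) \<in> Kset n f"
    by (intro Kset_sum Kset_const_mult specP) auto
  ultimately have diffK: "?X * g - R \<in> Kset n f" by (simp add: Kset_add)
  have keysR: "ks R \<subseteq> NN"
  proof -
    have "ks R \<subseteq> (\<Union>i<ww. ks (const_poly (pi g i) * nf (?P i)))" unfolding R_def by (rule keys_sum)
    also have "\<dots> \<subseteq> NN" using keys_const_mult specP(1) by blast
    finally show ?thesis .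
  qed
  have "nf (?X * g) = R"
    by (rule normal_form_eq[OF keysR diffK in_vars_mult[OF in_vars_var[OF l] g]])
  hence "pi (?X * g) j = lk R (ms j)" by (simp add: pi_def)
  also have "\<dots> = (\<Sum>i<ww. pi g i * pi (?P i) j)"
    by (simp add: R_def lookup_sum lookup_const_mult pi_def)
  also have "\<dots> = (\<Sum>i<ww. pi g i * AA l $$ (i, j))"
    using j by (simp add: AA_entry)
  finally show ?thesis by simp
qed

lemma pi_power:
  assumes g: "in_vars n g" and l: "l < n" and j: "j < ww"
  shows "(\<Sum>i<ww. pi g i * (AA l ^\<^sub>m k) $$ (i, j)) = pi (var_poly l ^ k * g) j"
  using j
proof (induction k arbitrary: j)
  case 0
  have "(\<Sum>i<ww. pi g i * (AA l ^\<^sub>m 0) $$ (i, j)) = (\<Sum>i<ww. if i = j then pi g i else 0)"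
    using 0 by (intro sum.cong) (auto simp: mult_table_def)
  also have "\<dots> = pi g j" using 0 by simp
  finally show ?case by simp
next
  case (Suc k)
  have pc: "AA l ^\<^sub>m k \<in> carrier_mat ww ww" using AA_carrier by (rule pow_carrier_mat)
  have "(\<Sum>i<ww. pi g i * (AA l ^\<^sub>m Suc k) $$ (i, j)) =
        (\<Sum>i<ww. \<Sum>b<ww. pi g i * ((AA l ^\<^sub>m k) $$ (i, b) * AA l $$ (b, j)))"
    using Suc.prems by (simp add: mult_entry[OF pc AA_carrier] sum_distrib_left)
  also have "\<dots> = (\<Sum>b<ww. (\<Sum>i<ww. pi g i * (AA l ^\<^sub>m k) $$ (i, b)) * AA l $$ (b, j))"
    by (subst sum.swap) (simp add: sum_distrib_right mult.assoc)
  also have "\<dots> = (\<Sum>b<ww. pi (var_poly l ^ k * g) b * AA l $$ (b, j))"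
    using Suc.IH by simp
  also have "\<dots> = pi (var_poly l * (var_poly l ^ k * g)) j"
    by (rule row_mult[OF in_vars_mult[OF in_vars_pow[OF in_vars_var[OF l]] g] l Suc.prems])
  finally show ?case by (simp add: mult.assoc)
qed

definition GF :: "nat \<Rightarrow> cpoly mat" where
  "GF s = G_factor ww d (AA s) s"

definition QQ :: "nat \<Rightarrow> cpoly mat" where
  "QQ s = foldr (*) (map GF [s..<n]) (1\<^sub>m ww)"

lemma GF_carrier: "GF s \<in> carrier_mat ww ww"
  unfolding GF_def G_factor_def carrier_mat_def by (simp only: foldr_add_dims mem_Collect_eq)

lemma GF_entry:
  assumes "i < ww" "a < ww"
  shows "GF s $$ (i, a) = (\<Sum>e<Suc d. const_poly (1 / fact e) * var_poly s ^ e * const_poly ((AA s ^\<^sub>m e) $$ (i, a)))"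
proof -
  have pc: "AA s ^\<^sub>m e \<in> carrier_mat ww ww" for e using AA_carrier by (rule pow_carrier_mat)
  have "GF s $$ (i, a) = (\<Sum>M\<leftarrow>map (\<lambda>k. (const_poly (1 / fact k) * var_poly s ^ k) \<cdot>\<^sub>m lift_mat (AA s ^\<^sub>m k)) [0..<Suc d]. M $$ (i, a))"
    unfolding GF_def G_factor_def
    by (rule foldr_add_index(1)[OF assms, where xs = "map (\<lambda>k. (const_poly (1 / fact k) * var_poly s ^ k) \<cdot>\<^sub>m lift_mat (AA s ^\<^sub>m k)) [0..<Suc d]"])
  also have "\<dots> = (\<Sum>k\<leftarrow>[0..<Suc d]. const_poly (1 / fact k) * var_poly s ^ k * const_poly ((AA s ^\<^sub>m k) $$ (i, a)))"
  proof -
    have ent: "(c \<cdot>\<^sub>m lift_mat (AA s ^\<^sub>m k)) $$ (i, a) = c * const_poly ((AA s ^\<^sub>m k) $$ (i, a))" for c k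
      using assms carrier_matD[OF pc[of k]] by (simp add: lift_mat_def)
    show ?thesis by (simp only: map_map o_def ent)
  qed
  also have "\<dots> = (\<Sum>e<Suc d. const_poly (1 / fact e) * var_poly s ^ e * const_poly ((AA s ^\<^sub>m e) $$ (i, a)))"
    by (simp only: interv_sum_list_conv_sum_set_nat set_upt atLeast0LessThan)
  finally show ?thesis .
qed

lemma QQ_carrier: "QQ s \<in> carrier_mat ww ww"
proof -
  have "\<forall>M\<in>set (map GF xs). M \<in> carrier_mat ww ww" for xs using GF_carrier by auto
  have "foldr (*) (map GF xs) (1\<^sub>m ww) \<in> carrier_mat ww ww" for xs
    by (induction xs) (auto intro: mult_carrier_mat GF_carrier)
  thus ?thesis by (simp add: QQ_def)
qed

lemma QQ_step: "s < n \<Longrightarrow> QQ s = GF s * QQ (Suc s)"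
  by (simp add: QQ_def upt_conv_Cons)

lemma QQ_n: "QQ n = 1\<^sub>m ww"
  by (simp add: QQ_def)

lemma G_subst_QQ: "G_subst n ww d AA = QQ 0"
  by (simp add: G_subst_def QQ_def GF_def[abs_def])

definition rowQ :: "nat \<Rightarrow> cpoly \<Rightarrow> nat \<Rightarrow> cpoly" where
  "rowQ s g j = (\<Sum>i<ww. const_poly (pi g i) * QQ s $$ (i, j))"

lemma rowQ_step:
  assumes s: "s < n" and g: "in_vars n g" and j: "j < ww"
  shows "rowQ s g j = (\<Sum>e<Suc d. const_poly (1 / fact e) * var_poly s ^ e * rowQ (Suc s) (var_poly s ^ e * g) j)"
proof -
  let ?c = "\<lambda>e. const_poly (1 / fact e) * var_poly s ^ e"
  let ?B = "\<lambda>e i a. (AA s ^\<^sub>m e) $$ (i, a)"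
  let ?Q = "\<lambda>a. QQ (Suc s) $$ (a, j)"
  have "rowQ s g j = (\<Sum>i<ww. \<Sum>a<ww. const_poly (pi g i) * (GF s $$ (i, a) * ?Q a))"
    unfolding rowQ_def QQ_step[OF s] using j
    by (simp add: mult_entry[OF GF_carrier QQ_carrier] sum_distrib_left)
  also have "\<dots> = (\<Sum>i<ww. \<Sum>a<ww. \<Sum>e<Suc d. ?c e * (const_poly (pi g i * ?B e i a) * ?Q a))"
  proof (intro sum.cong refl)
    fix i a assume ia: "i \<in> {..<ww}" "a \<in> {..<ww}"
    show "const_poly (pi g i) * (GF s $$ (i, a) * ?Q a) = (\<Sum>e<Suc d. ?c e * (const_poly (pi g i * ?B e i a) * ?Q a))"
      unfolding GF_entry[of i a s, OF _ _] using ia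
      by (simp only: lessThan_iff GF_entry sum_distrib_left sum_distrib_right)
         (rule sum.cong, simp_all add: const_poly_mult mult_ac)
  qed
  also have "\<dots> = (\<Sum>e<Suc d. \<Sum>a<ww. \<Sum>i<ww. ?c e * (const_poly (pi g i * ?B e i a) * ?Q a))"
  proof -
    define T where "T i a e = ?c e * (const_poly (pi g i * ?B e i a) * ?Q a)" for i a e
    have "(\<Sum>i<ww. \<Sum>a<ww. \<Sum>e<Suc d. T i a e) = (\<Sum>i<ww. \<Sum>e<Suc d. \<Sum>a<ww. T i a e)"
      by (rule sum.cong[OF refl], rule sum.swap)
    also have "\<dots> = (\<Sum>e<Suc d. \<Sum>i<ww. \<Sum>a<ww. T i a e)" by (rule sum.swap)
    also have "\<dots> = (\<Sum>e<Suc d. \<Sum>a<ww. \<Sum>i<ww. T i a e)"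
      by (rule sum.cong[OF refl], rule sum.swap)
    finally show ?thesis unfolding T_def .
  qed
  also have "\<dots> = (\<Sum>e<Suc d. ?c e * (\<Sum>a<ww. const_poly (\<Sum>i<ww. pi g i * ?B e i a) * ?Q a))"
    by (simp add: sum_distrib_left sum_distrib_right const_poly_sum)
  also have "\<dots> = (\<Sum>e<Suc d. ?c e * (\<Sum>a<ww. const_poly (pi (var_poly s ^ e * g) a) * ?Q a))"
    using pi_power[OF g s] by simp
  also have "\<dots> = (\<Sum>e<Suc d. ?c e * rowQ (Suc s) (var_poly s ^ e * g) j)"
    by (simp add: rowQ_def)
  finally show ?thesis .
qed

definition vv :: "nat \<Rightarrow> complex" where
  "vv j = FF f (ms j)"

lemma Dz_nf:
  assumes g: "in_vars n g"
  shows "Dz f g 0 = (\<Sum>j<ww. vv j * pi g j)"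
proof -
  have sg: "ks (nf g) \<subseteq> NN" "g - nf g \<in> Kset n f" using normal_form_spec[OF g] by auto
  have "Dz f (g - nf g) 0 = 0" using sg(2) by (simp add: Kset_def)
  hence "Dz f g 0 = Dz f (nf g) 0" by (simp add: Dz_diff)
  also have "\<dots> = (\<Sum>m\<in>NN. lk (nf g) m * FF f m)"
    unfolding Dz_def by (simp add: wsum_superset[OF finNN sg(1)])
  also have "\<dots> = (\<Sum>j<ww. lk (nf g) (ms j) * FF f (ms j))"
    by (rule sum.reindex_bij_betw[OF ms_bij, symmetric])
  finally show ?thesis by (simp add: vv_def pi_def mult.commute)
qed

lemma claimA:
  assumes "s \<le> n" "in_vars n g"
  shows "(\<Sum>j<ww. const_poly (vv j) * rowQ s g j) = psi f d (n - s) s g"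
  using assms
proof (induction "n - s" arbitrary: s g)
  case 0
  hence sn: "s = n" by simp
  have "rowQ s g j = const_poly (pi g j)" if "j < ww" for j
  proof -
    have "rowQ s g j = (\<Sum>i<ww. if i = j then const_poly (pi g i) else 0)"
      unfolding rowQ_def sn QQ_n using that by (intro sum.cong) auto
    thus ?thesis using that by simp
  qed
  hence "(\<Sum>j<ww. const_poly (vv j) * rowQ s g j) = const_poly (\<Sum>j<ww. vv j * pi g j)"
    by (simp add: const_poly_sum const_poly_mult)
  also have "\<dots> = psi f d (n - s) s g" using Dz_nf[OF "0.prems"(2)] sn by simp
  finally show ?case .
next
  case (Suc k)
  hence s: "s < n" and k: "k = n - Suc s" by auto
  have "(\<Sum>j<ww. const_poly (vv j) * rowQ s g j) =
     (\<Sum>j<ww. \<Sum>e<Suc d. const_poly (1 / fact e) * var_poly s ^ e * (const_poly (vv j) * rowQ (Suc s) (var_poly s ^ e * g) j))"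
  proof (intro sum.cong refl)
    fix j assume "j \<in> {..<ww}"
    hence j: "j < ww" by simp
    show "const_poly (vv j) * rowQ s g j = (\<Sum>e<Suc d. const_poly (1 / fact e) * var_poly s ^ e * (const_poly (vv j) * rowQ (Suc s) (var_poly s ^ e * g) j))"
      by (simp only: rowQ_step[OF s Suc.prems(2) j] sum_distrib_left) (rule sum.cong, simp_all add: mult_ac)
  qed
  also have "\<dots> = (\<Sum>e<Suc d. const_poly (1 / fact e) * var_poly s ^ e * (\<Sum>j<ww. const_poly (vv j) * rowQ (Suc s) (var_poly s ^ e * g) j))"
    by (subst sum.swap) (simp add: sum_distrib_left)
  also have "\<dots> = (\<Sum>e<Suc d. const_poly (1 / fact e) * var_poly s ^ e * psi f d k (Suc s) (var_poly s ^ e * g))"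
  proof (intro sum.cong refl)
    fix e
    have "in_vars n (var_poly s ^ e * g)"
      by (intro in_vars_mult in_vars_pow in_vars_var s Suc.prems(2))
    thus "const_poly (1 / fact e) * var_poly s ^ e * (\<Sum>j<ww. const_poly (vv j) * rowQ (Suc s) (var_poly s ^ e * g) j) =
          const_poly (1 / fact e) * var_poly s ^ e * psi f d k (Suc s) (var_poly s ^ e * g)"
      using Suc.hyps(1)[OF k] s k by simp
  qed
  also have "\<dots> = psi f d (n - s) s g" by (simp only: Suc.hyps(2)[symmetric] psi.simps)
  finally show ?case .
qed

lemma var_pow: "var_poly s ^ e = mono_poly (Poly_Mapping.single s e)"
proof (induction e)
  case 0 thus ?case by (simp add: mono_poly_def)
next
  case (Suc e)
  have "Poly_Mapping.single s (Suc e) = Poly_Mapping.single s 1 + Poly_Mapping.single s e"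
    by (simp flip: single_add)
  thus ?case using Suc by (simp add: var_poly_def mono_poly_def mult_single)
qed

lemma mono_mult: "mono_poly a * mono_poly b = mono_poly (a + b)"
  by (simp add: mono_poly_def mult_single)

lemma mfact_add_single:
  assumes "s \<notin> ks b"
  shows "mfact (b + Poly_Mapping.single s e) = mfact b * fact e"
proof -
  have bs: "lk b s = 0" using assms by (simp add: in_keys_iff)
  have "mfact (b + Poly_Mapping.single s e) = (\<Prod>i\<in>insert s (ks b). fact (lk (b + Poly_Mapping.single s e) i))"
    by (rule mfact_superset) (auto simp: keys_add_nat)
  also have "\<dots> = fact e * (\<Prod>i\<in>ks b. fact (lk (b + Poly_Mapping.single s e) i))"
    using assms bs by (simp add: lookup_add)
  also have "(\<Prod>i\<in>ks b. fact (lk (b + Poly_Mapping.single s e) i)) = (\<Prod>i\<in>ks b. (fact (lk b i) :: complex))"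
    using assms by (intro prod.cong refl) (auto simp: lookup_add lookup_single when_def)
  finally show ?thesis by (simp add: mfact_def mult.commute)
qed

definition TT :: "nat \<Rightarrow> mono \<Rightarrow> cpoly" where
  "TT s b = (\<Sum>m\<in>{m \<in> ks f. \<forall>i<s. lk m i = lk b i}. Poly_Mapping.single (m - b) (lk f m))"

lemma TT_step:
  assumes s: "s < n" and b: "ks b \<subseteq> {..<s}"
  shows "(\<Sum>e<Suc d. var_poly s ^ e * TT (Suc s) (b + Poly_Mapping.single s e)) = TT s b"
proof -
  let ?S = "{m \<in> ks f. \<forall>i<s. lk m i = lk b i}"
  let ?F = "\<lambda>m. Poly_Mapping.single (m - b) (lk f m)"
  have bs: "lk b s = 0" using b by (auto simp: in_keys_iff)
  have Se: "{m \<in> ks f. \<forall>i<Suc s. lk m i = lk (b + Poly_Mapping.single s e) i} = {m \<in> ?S. lk m s = e}" for e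
  proof -
    have "(\<forall>i<Suc s. lk m i = lk (b + Poly_Mapping.single s e) i) \<longleftrightarrow> (\<forall>i<s. lk m i = lk b i) \<and> lk m s = e" for m
      using bs by (auto simp: lookup_add lookup_single when_def less_Suc_eq)
    thus ?thesis by blast
  qed
  have termE: "var_poly s ^ e * TT (Suc s) (b + Poly_Mapping.single s e) = (\<Sum>m\<in>{m \<in> ?S. lk m s = e}. ?F m)" for e
  proof -
    have "var_poly s ^ e * TT (Suc s) (b + Poly_Mapping.single s e) =
        (\<Sum>m\<in>{m \<in> ?S. lk m s = e}. Poly_Mapping.single (Poly_Mapping.single s e + (m - (b + Poly_Mapping.single s e))) (lk f m))"
      unfolding TT_def Se var_pow by (simp add: sum_distrib_left mono_poly_def mult_single)
    also have "\<dots> = (\<Sum>m\<in>{m \<in> ?S. lk m s = e}. ?F m)"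
    proof (intro sum.cong refl)
      fix m assume m: "m \<in> {m \<in> ?S. lk m s = e}"
      have "Poly_Mapping.single s e + (m - (b + Poly_Mapping.single s e)) = m - b"
      proof (rule poly_mapping_eqI)
        fix i
        show "lk (Poly_Mapping.single s e + (m - (b + Poly_Mapping.single s e))) i = lk (m - b) i"
          using m bs by (cases "i = s") (auto simp: lookup_add lookup_minus lookup_single when_def)
      qed
      thus "Poly_Mapping.single (Poly_Mapping.single s e + (m - (b + Poly_Mapping.single s e))) (lk f m) = ?F m"
        by simp
    qed
    finally show ?thesis .
  qed
  have "(\<Sum>e<Suc d. var_poly s ^ e * TT (Suc s) (b + Poly_Mapping.single s e)) =
        (\<Sum>e<Suc d. \<Sum>m\<in>{m \<in> ?S. lk m s = e}. ?F m)"
    using termE by simp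
  also have "\<dots> = (\<Sum>m\<in>?S. ?F m)"
  proof (rule sum.group)
    show "finite ?S" by simp
    show "finite {..<Suc d}" by simp
    show "(\<lambda>m. lk m s) ` ?S \<subseteq> {..<Suc d}"
    proof
      fix x assume "x \<in> (\<lambda>m. lk m s) ` ?S"
      then obtain m where m: "m \<in> ks f" "x = lk m s" by auto
      have "tdeg m = d" using fh m(1) by (simp add: homogeneous_def)
      thus "x \<in> {..<Suc d}" using lookup_le_tdeg[of m s] m(2) by simp
    qed
  qed
  also have "\<dots> = TT s b" by (simp add: TT_def)
  finally show ?thesis .
qed

lemma claimB:
  assumes "s \<le> n" "ks b \<subseteq> {..<s}"
  shows "psi f d (n - s) s (mono_poly b) = const_poly (mfact b) * TT s b"
  using assms
proof (induction "n - s" arbitrary: s b)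
  case 0
  hence sn: "s = n" by simp
  have set: "{m \<in> ks f. \<forall>i<n. lk m i = lk b i} = (if b \<in> ks f then {b} else {})"
  proof -
    have "m = b" if "m \<in> ks f" "\<forall>i<n. lk m i = lk b i" for m
    proof (rule poly_mapping_eqI)
      fix i
      show "lk m i = lk b i"
      proof (cases "i < n")
        case False
        hence "i \<notin> ks m" "i \<notin> ks b" using that(1) fv "0.prems"(2) sn by (auto simp: in_vars_def)
        thus ?thesis by (simp add: in_keys_iff)
      qed (use that in auto)
    qed
    thus ?thesis by auto
  qed
  have "TT s b = const_poly (lk f b)"
    unfolding TT_def sn set by (auto simp: const_poly_def in_keys_iff)
  moreover have "psi f d (n - s) s (mono_poly b) = const_poly (lk f b * mfact b)"
    using sn by (simp add: mono_poly_def Dz_single FF_def)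
  ultimately show ?case by (simp add: const_poly_mult mult.commute)
next
  case (Suc k)
  hence s: "s < n" and k: "k = n - Suc s" by auto
  have sb: "s \<notin> ks b" using Suc.prems(2) by auto
  have "psi f d (n - s) s (mono_poly b) =
     (\<Sum>e<Suc d. const_poly (1 / fact e) * var_poly s ^ e * psi f d k (Suc s) (var_poly s ^ e * mono_poly b))"
    by (simp only: Suc.hyps(2)[symmetric] psi.simps)
  also have "\<dots> = (\<Sum>e<Suc d. const_poly (mfact b) * (var_poly s ^ e * TT (Suc s) (b + Poly_Mapping.single s e)))"
  proof (intro sum.cong refl)
    fix e
    have kb: "ks (b + Poly_Mapping.single s e) \<subseteq> {..<Suc s}"
      using Suc.prems(2) by (auto simp: keys_add_nat)
    have eq: "var_poly s ^ e * mono_poly b = mono_poly (b + Poly_Mapping.single s e)"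
      by (simp add: var_pow mono_mult add.commute)
    have "psi f d k (Suc s) (var_poly s ^ e * mono_poly b) =
          const_poly (mfact b * fact e) * TT (Suc s) (b + Poly_Mapping.single s e)"
      unfolding eq using Suc.hyps(1)[OF k _ kb] s mfact_add_single[OF sb] k by simp
    moreover have "const_poly (1 / fact e) * const_poly (mfact b * fact e) = const_poly (mfact b)"
      by (simp flip: const_poly_mult)
    ultimately show "const_poly (1 / fact e) * var_poly s ^ e * psi f d k (Suc s) (var_poly s ^ e * mono_poly b) =
          const_poly (mfact b) * (var_poly s ^ e * TT (Suc s) (b + Poly_Mapping.single s e))"
      by (metis (no_types, lifting) mult.assoc mult.left_commute)
  qed
  also have "\<dots> = const_poly (mfact b) * TT s b"
    by (simp only: sum_distrib_left[symmetric] TT_step[OF s Suc.prems(2)])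
  finally show ?case .
qed

lemma final_main: "(\<Sum>j<ww. const_poly (vv j) * G_subst n ww d AA $$ (0, j)) = f"
proof -
  have z: "0 \<in> NN" by (rule zero_in_normal_set[OF fnz])
  have ms0: "ms 0 = 0" by (rule normal_mono_zero[OF finNN z])
  have inj: "inj_on ms {..<ww}" using ms_bij by (rule bij_betw_imp_inj_on)
  have wpos: "0 < ww" using z finNN by (auto simp: card_gt_0_iff)
  have v1: "in_vars n 1" by (simp add: in_vars_def)
  have nf1: "nf 1 = 1"
    by (rule normal_form_eq[OF _ _ v1]) (use z Kset_ideal[of n f] in \<open>auto simp: is_ideal_def\<close>)
  have pi1: "pi 1 i = (if i = 0 then 1 else 0)" if "i < ww" for i
  proof -
    have "ms i = 0 \<longleftrightarrow> i = 0" using inj that wpos ms0 by (metis inj_onD lessThan_iff)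
    thus ?thesis by (simp add: pi_def nf1 lookup_one when_def)
  qed
  have row: "G_subst n ww d AA $$ (0, j) = rowQ 0 1 j" if "j < ww" for j
  proof -
    have "rowQ 0 1 j = (\<Sum>i<ww. if i = 0 then QQ 0 $$ (i, j) else 0)"
      unfolding rowQ_def by (intro sum.cong refl) (simp add: pi1)
    also have "\<dots> = QQ 0 $$ (0, j)" using wpos by simp
    finally show ?thesis by (simp add: G_subst_QQ)
  qed
  have "(\<Sum>j<ww. const_poly (vv j) * G_subst n ww d AA $$ (0, j)) = (\<Sum>j<ww. const_poly (vv j) * rowQ 0 1 j)"
    using row by simp
  also have "\<dots> = psi f d (n - 0) 0 1" by (rule claimA[OF _ v1]) simp
  also have "\<dots> = psi f d (n - 0) 0 (mono_poly 0)" by (simp add: mono_poly_def)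
  also have "\<dots> = const_poly (mfact 0) * TT 0 0" by (rule claimB) auto
  also have "\<dots> = (\<Sum>m\<in>ks f. Poly_Mapping.single m (lk f m))" by (simp add: TT_def)
  also have "\<dots> = f" by (rule poly_expand[symmetric])
  finally show ?thesis .
qed

end

theorem lemma3p5:
  fixes n d w :: nat and f :: cpoly
  assumes "in_vars n f"
    and "homogeneous d f"
    and "dim_partials f = w"
  shows "\<exists>v :: complex vec. dim_vec v = w \<and>
    (\<Sum>j<w. const_poly (v $ j) * (G_subst n w d (mult_table n f w)) $$ (0, j)) = f"
proof (cases "f = 0")
  case True
  show ?thesis
    by (rule exI[of _ "vec w (\<lambda>_. 0)"]) (simp add: True)
next
  case False
  have w: "w = card (normal_set n f)" using dim_partials_eq[OF assms(1,2)] assms(3) by simp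
  show ?thesis
  proof (rule exI[of _ "vec w (vv n f)"], intro conjI)
    show "dim_vec (vec w (vv n f)) = w" by simp
    have "(\<Sum>j<w. const_poly (vec w (vv n f) $ j) * (G_subst n w d (mult_table n f w)) $$ (0, j)) =
          (\<Sum>j<w. const_poly (vv n f j) * (G_subst n w d (mult_table n f w)) $$ (0, j))"
      by (intro sum.cong refl) simp
    also have "\<dots> = f" unfolding w by (rule final_main[OF assms(1,2) False])
    finally show "(\<Sum>j<w. const_poly (vec w (vv n f) $ j) * (G_subst n w d (mult_table n f w)) $$ (0, j)) = f" .
  qed
qed

end
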